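(* There exist constants $K_1,K_2$ such that for every $\varepsilon>0$, $$\sum_{n\le x}\frac{1}{\beta(n)}=K_1\log x+K_2+O\!\left(x^{-1+\varepsilon}\right)\qquad (x\to\infty),$$ where $K_1=\prod_p\left(1-\frac1p\right)\left(1+\sum_{a=1}^{\infty}\frac{1}{\beta(p^a)}\right)$, the product being over all primes.
   Context: $\beta$ is the multiplicative arithmetic function with $\beta(1)=1$ and $\beta(p^a)=\frac{p^{a+1}+(-1)^a}{p+1}$ for every prime power $p^a$ ($a\ge1$); equivalently $\beta(n)=\sum_{d\mid n}d\,\lambda(n/d)$ with $\lambda$ the Liouville function. *)

theory Defs
  imports "HOL-Analysis.Analysis" "HOL-Library.Landau_Symbols"
    "HOL-Computational_Algebra.Primes"
begin

definition liouville :: "nat \<Rightarrow> real" where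
  "liouville n = (-1) ^ size (prime_factorization n)"

definition beta :: "nat \<Rightarrow> real" where
  "beta n = (\<Sum>d \<in> {d. d dvd n}. real d * liouville (n div d))"

definition K1_factor :: "nat \<Rightarrow> real" where
  "K1_factor p = (1 - 1 / real p) * (1 + (\<Sum>a. 1 / beta (p ^ Suc a)))"

end

theory Submission
  imports Defs
begin

definition M :: "(nat \<Rightarrow> nat \<Rightarrow> real) \<Rightarrow> nat \<Rightarrow> real" where
  "M F d = (\<Prod>p\<in>prime_factors d. F p (multiplicity p d))"

lemma M_ext:
  assumes "finite P" "prime_factors d \<subseteq> P" "\<And>p. p\<in>P \<Longrightarrow> prime p" "\<And>p. p\<in>P \<Longrightarrow> F p 0 = 1"
  shows "M F d = (\<Prod>p\<in>P. F p (multiplicity p d))"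
  unfolding M_def
proof (rule prod.mono_neutral_left[OF assms(1,2)])
  show "\<forall>i\<in>P - prime_factors d. F i (multiplicity i d) = 1"
  proof
    fix i assume i: "i \<in> P - prime_factors d"
    then have "multiplicity i d = 0" using assms(3) by (auto simp: prime_factors_multiplicity)
    then show "F i (multiplicity i d) = 1" using assms(4) i by auto
  qed
qed

lemma prod_pp_pos: "finite P \<Longrightarrow> (\<And>p. p\<in>P \<Longrightarrow> prime p) \<Longrightarrow> (\<Prod>p\<in>P. p ^ e p) > (0::nat)"
  by (simp add: prime_gt_0_nat prod_pos)

lemma L1:
  assumes P: "finite P" "\<And>p. p\<in>P \<Longrightarrow> prime p" and F: "\<And>p. p\<in>P \<Longrightarrow> F p 0 = 1"
  shows "(\<Sum>d\<in>{d. d>0 \<and> prime_factors d \<subseteq> P \<and> (\<forall>p\<in>P. multiplicity p d \<le> A p)}. M F d)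
         = (\<Prod>p\<in>P. \<Sum>a\<le>A p. F p a)"
proof -
  have "(\<Prod>p\<in>P. \<Sum>a\<le>A p. F p a) = (\<Sum>e\<in>PiE P (\<lambda>p. {..A p}). \<Prod>p\<in>P. F p (e p))"
    using P by (intro prod_sum_PiE) auto
  moreover have "(\<Sum>d\<in>{d. d>0 \<and> prime_factors d \<subseteq> P \<and> (\<forall>p\<in>P. multiplicity p d \<le> A p)}. M F d) = (\<Sum>e\<in>PiE P (\<lambda>p. {..A p}). \<Prod>p\<in>P. F p (e p))"
  proof (rule sum.reindex_bij_witness[where j = "\<lambda>d. restrict (\<lambda>p. multiplicity p d) P"
                                      and i = "\<lambda>e. \<Prod>p\<in>P. p ^ e p"])
    fix a assume a: "a \<in> {d. d>0 \<and> prime_factors d \<subseteq> P \<and> (\<forall>p\<in>P. multiplicity p d \<le> A p)}"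
    have "(\<Prod>p\<in>P. p ^ restrict (\<lambda>p. multiplicity p a) P p) = (\<Prod>p\<in>P. p ^ multiplicity p a)"
      by (rule prod.cong) auto
    also have "\<dots> = (\<Prod>p\<in>prime_factors a. p ^ multiplicity p a)"
    proof (rule prod.mono_neutral_right[OF P(1)])
      show "prime_factors a \<subseteq> P" using a by auto
      show "\<forall>i\<in>P - prime_factors a. i ^ multiplicity i a = 1"
        using P(2) by (auto simp: prime_factors_multiplicity)
    qed
    also have "\<dots> = a" using a prime_factorization_nat[of a] by auto
    finally show "(\<Prod>p\<in>P. p ^ restrict (\<lambda>p. multiplicity p a) P p) = a" .
    show "restrict (\<lambda>p. multiplicity p a) P \<in> PiE P (\<lambda>p. {..A p})" using a by auto
    show "(\<Prod>p\<in>P. F p (restrict (\<lambda>p. multiplicity p a) P p)) = M F a"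
      using M_ext[of P a F] a P F by auto
  next
    fix b assume b: "b \<in> PiE P (\<lambda>p. {..A p})"
    have mb: "\<And>q. prime q \<Longrightarrow> multiplicity q (\<Prod>p\<in>P. p ^ b p) = (if q \<in> P then b q else 0)"
      by (rule multiplicity_prod_prime_powers) (use P in auto)
    show "restrict (\<lambda>p. multiplicity p (\<Prod>p\<in>P. p ^ b p)) P = b"
    proof
      fix q show "restrict (\<lambda>p. multiplicity p (\<Prod>p\<in>P. p ^ b p)) P q = b q"
      proof (cases "q \<in> P")
        case True
        then show ?thesis using mb[of q] P(2)[of q] by simp
      next
        case False
        then show ?thesis using PiE_arb[OF b False] by simp
      qed
    qed
    have "prime_factors (\<Prod>p\<in>P. p ^ b p) \<subseteq> P"
    proof
      fix q assume "q \<in> prime_factors (\<Prod>p\<in>P. p ^ b p)"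
      then have "prime q" "multiplicity q (\<Prod>p\<in>P. p ^ b p) > 0" by (auto simp: prime_factors_multiplicity)
      then show "q \<in> P" using mb by (auto split: if_splits)
    qed
    then show "(\<Prod>p\<in>P. p ^ b p) \<in> {d. d>0 \<and> prime_factors d \<subseteq> P \<and> (\<forall>p\<in>P. multiplicity p d \<le> A p)}"
      using prod_pp_pos[OF P, of b] mb P(2) b by auto
  qed
  ultimately show ?thesis by simp
qed

lemma liouville_M:
  assumes "e > 0"
  shows "liouville e / real e = M (\<lambda>p a. (-1 / real p) ^ a) e"
proof -
  have sz: "size (prime_factorization e) = (\<Sum>p\<in>prime_factors e. multiplicity p e)"
    unfolding size_multiset_overloaded_eq
    by (rule sum.cong) (auto simp: count_prime_factorization_prime in_prime_factors_imp_prime)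
  have l: "liouville e = (\<Prod>p\<in>prime_factors e. (-1::real) ^ multiplicity p e)"
    unfolding liouville_def sz by (simp add: power_sum)
  have r: "real e = (\<Prod>p\<in>prime_factors e. real p ^ multiplicity p e)"
  proof -
    have "real e = real (\<Prod>p\<in>prime_factors e. p ^ multiplicity p e)"
      using prime_factorization_nat[OF assms] by simp
    also have "\<dots> = (\<Prod>p\<in>prime_factors e. real p ^ multiplicity p e)" by simp
    finally show ?thesis .
  qed
  have "M (\<lambda>p a. (-1 / real p) ^ a) e = (\<Prod>p\<in>prime_factors e. (-1::real) ^ multiplicity p e / real p ^ multiplicity p e)"
    unfolding M_def by (intro prod.cong refl power_divide)
  also have "\<dots> = liouville e / real e" unfolding l r by (rule prod_dividef)
  finally show ?thesis by simp
qed

lemma beta_alt: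
  assumes n: "n > 0"
  shows "beta n = real n * (\<Sum>e\<in>{e. e dvd n}. liouville e / real e)"
proof -
  have "beta n = (\<Sum>e\<in>{e. e dvd n}. real (n div e) * liouville e)"
    unfolding beta_def
  proof -
    have key: "n div (n div a) = a \<and> (n div a) dvd n" if a: "a dvd n" for a
    proof -
      from a obtain k where k: "n = a * k" by auto
      with n have "a > 0" "k > 0" by auto
      with k show ?thesis by simp
    qed
    show "(\<Sum>d\<in>{d. d dvd n}. real d * liouville (n div d)) = (\<Sum>e\<in>{e. e dvd n}. real (n div e) * liouville e)"
      by (rule sum.reindex_bij_witness[where i="\<lambda>d. n div d" and j="\<lambda>d. n div d"]) (use key in auto)
  qed
  also have "\<dots> = (\<Sum>e\<in>{e. e dvd n}. real n * (liouville e / real e))"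
    by (rule sum.cong) (auto simp: real_of_nat_div)
  also have "\<dots> = real n * (\<Sum>e\<in>{e. e dvd n}. liouville e / real e)"
    by (simp add: sum_distrib_left)
  finally show ?thesis .
qed

lemma divisors_D:
  assumes n: "n > (0::nat)"
  shows "{d. d dvd n} = {d. d>0 \<and> prime_factors d \<subseteq> prime_factors n \<and> (\<forall>p\<in>prime_factors n. multiplicity p d \<le> multiplicity p n)}"
proof (intro equalityI subsetI)
  fix d assume "d \<in> {d. d dvd n}"
  then have d: "d dvd n" by simp
  then have "d > 0" using n by (auto intro: Nat.gr0I)
  moreover have "prime_factors d \<subseteq> prime_factors n"
    using d n \<open>d>0\<close> by (auto simp: prime_factors_dvd intro: dvd_trans)
  moreover have "\<forall>p\<in>prime_factors n. multiplicity p d \<le> multiplicity p n"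
    using d n by (auto intro: dvd_imp_multiplicity_le)
  ultimately show "d \<in> {d. d>0 \<and> prime_factors d \<subseteq> prime_factors n \<and> (\<forall>p\<in>prime_factors n. multiplicity p d \<le> multiplicity p n)}"
    by simp
next
  fix d assume "d \<in> {d. d>0 \<and> prime_factors d \<subseteq> prime_factors n \<and> (\<forall>p\<in>prime_factors n. multiplicity p d \<le> multiplicity p n)}"
  then have d: "d > 0" "prime_factors d \<subseteq> prime_factors n" "\<forall>p\<in>prime_factors n. multiplicity p d \<le> multiplicity p n"
    by auto
  have "d dvd n"
  proof (rule multiplicity_le_imp_dvd)
    show "d \<noteq> 0" using d by simp
    fix p :: nat assume p: "prime p"
    show "multiplicity p d \<le> multiplicity p n"
    proof (cases "p \<in> prime_factors n")
      case True then show ?thesis using d by auto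
    next
      case False
      then have "p \<notin> prime_factors d" using d by auto
      then have "multiplicity p d = 0" using p by (auto simp: prime_factors_multiplicity)
      then show ?thesis by simp
    qed
  qed
  then show "d \<in> {d. d dvd n}" by simp
qed

lemma L2:
  assumes n: "n > (0::nat)" and F: "\<And>p. F p 0 = 1"
  shows "(\<Sum>d\<in>{d. d dvd n}. M F d) = M (\<lambda>p v. \<Sum>a\<le>v. F p a) n"
proof -
  have "(\<Sum>d\<in>{d. d dvd n}. M F d) = (\<Prod>p\<in>prime_factors n. \<Sum>a\<le>multiplicity p n. F p a)"
    unfolding divisors_D[OF n]
    by (rule L1) (auto simp: F in_prime_factors_imp_prime)
  then show ?thesis by (simp add: M_def)
qed

definition Bloc :: "nat \<Rightarrow> nat \<Rightarrow> real" where
  "Bloc p v = (\<Sum>a\<le>v. (-1 / real p) ^ a)"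

lemma beta_M:
  assumes n: "n > 0"
  shows "beta n = real n * M Bloc n"
proof -
  have "(\<Sum>e\<in>{e. e dvd n}. liouville e / real e) = (\<Sum>e\<in>{e. e dvd n}. M (\<lambda>p a. (-1 / real p) ^ a) e)"
  proof (rule sum.cong[OF refl])
    fix e assume "e \<in> {e. e dvd n}"
    then have "e > 0" using n by (auto intro: Nat.gr0I)
    then show "liouville e / real e = M (\<lambda>p a. (-1 / real p) ^ a) e" by (rule liouville_M)
  qed
  also have "\<dots> = M (\<lambda>p v. \<Sum>a\<le>v. (-1 / real p) ^ a) n"
    by (rule L2[OF n]) simp
  also have "\<dots> = M Bloc n" by (simp add: Bloc_def[abs_def])
  finally show ?thesis using beta_alt[OF n] by simp
qed

definition hloc :: "nat \<Rightarrow> nat \<Rightarrow> real" where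
  "hloc p a = 1 / Bloc p a"

definition gloc :: "nat \<Rightarrow> nat \<Rightarrow> real" where
  "gloc p a = (if a = 0 then 1 else hloc p a - hloc p (a - 1))"

lemma Bloc_0 [simp]: "Bloc p 0 = 1" by (simp add: Bloc_def)
lemma hloc_0 [simp]: "hloc p 0 = 1" by (simp add: hloc_def)
lemma gloc_0 [simp]: "gloc p 0 = 1" by (simp add: gloc_def)

lemma sum_gloc: "(\<Sum>a\<le>v. gloc p a) = hloc p v"
  by (induction v) (auto simp: gloc_def)

definition g :: "nat \<Rightarrow> real" where "g n = M gloc n"

lemma inv_beta:
  assumes n: "n > 0"
  shows "1 / beta n = (\<Sum>d\<in>{d. d dvd n}. g d) / real n"
proof -
  have "(\<Sum>d\<in>{d. d dvd n}. g d) = M (\<lambda>p v. \<Sum>a\<le>v. gloc p a) n"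
    unfolding g_def by (rule L2[OF n]) simp
  also have "\<dots> = M hloc n" by (simp add: sum_gloc)
  also have "\<dots> = 1 / M Bloc n" unfolding M_def hloc_def by (simp add: prod_dividef)
  finally show ?thesis using beta_M[OF n] by simp
qed

lemma Bloc_formula: "Bloc p a = (1 - (-1 / real p) ^ Suc a) / (1 - (-1 / real p))"
proof -
  have "-1 / real p \<le> 0" by simp
  then have "(-1 / real p) \<noteq> 1" by linarith
  then show ?thesis unfolding Bloc_def by (subst sum_gp0) simp
qed

lemma Bloc_bounds:
  assumes p: "prime p"
  shows "1/3 \<le> Bloc p a \<and> Bloc p a \<le> 3/2"
proof -
  define q where "q = -1 / real p"
  have p2: "real p \<ge> 2" using prime_ge_2_nat[OF p] by simp
  have aq: "\<bar>q\<bar> = 1 / real p" unfolding q_def using p2 by simp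
  have "1 / real p \<le> 1/2" using p2 by (simp add: field_simps)
  then have aq2: "\<bar>q\<bar> \<le> 1/2" using aq by simp
  have "\<bar>q ^ Suc a\<bar> = \<bar>q\<bar> * \<bar>q\<bar> ^ a" by (simp add: power_abs abs_mult)
  also have "\<dots> \<le> \<bar>q\<bar> * 1" using aq2 by (intro mult_left_mono power_le_one) auto
  finally have t: "\<bar>q ^ Suc a\<bar> \<le> 1/2" using aq2 by simp
  have D: "1 \<le> 1 - q" "1 - q \<le> 3/2" using aq aq2 unfolding q_def by (auto simp: field_simps)
  have B: "Bloc p a = (1 - q ^ Suc a) / (1 - q)" unfolding q_def by (rule Bloc_formula)
  have num: "1/2 \<le> 1 - q ^ Suc a" "1 - q ^ Suc a \<le> 3/2" using t by auto
  have "1/3 \<le> (1 - q ^ Suc a) / (1 - q)"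
    using D num by (simp add: le_divide_eq)
  moreover have "(1 - q ^ Suc a) / (1 - q) \<le> 3/2"
    using D num by (simp add: divide_le_eq)
  ultimately show ?thesis unfolding B by simp
qed

lemma hloc_bounds:
  assumes p: "prime p"
  shows "0 < hloc p a \<and> hloc p a \<le> 3"
  using Bloc_bounds[OF p, of a] unfolding hloc_def by (auto simp: divide_le_eq)

lemma gloc_bound:
  assumes p: "prime p" and a: "a \<ge> 1"
  shows "\<bar>gloc p a\<bar> \<le> 9 * (1 / real p) ^ a"
proof -
  obtain b where b: "a = Suc b" using a by (cases a) auto
  have Bs: "Bloc p a = Bloc p b + (-1 / real p) ^ a" unfolding b Bloc_def by simp
  have b1: "1/3 \<le> Bloc p a" "1/3 \<le> Bloc p b" using Bloc_bounds[OF p] by auto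
  have "gloc p a = 1 / Bloc p a - 1 / Bloc p b" unfolding gloc_def hloc_def b by simp
  also have "\<dots> = - ((-1 / real p) ^ a) / (Bloc p a * Bloc p b)"
    using b1 Bs by (simp add: field_simps)
  finally have ga: "\<bar>gloc p a\<bar> = (1 / real p) ^ a / (Bloc p a * Bloc p b)"
    using b1 by (simp add: power_abs abs_mult)
  have "(1/3) * (1/3) \<le> Bloc p a * Bloc p b"
    by (rule mult_mono) (use b1 in auto)
  then have prodB: "1/9 \<le> Bloc p a * Bloc p b" by simp
  have "(1 / real p) ^ a / (Bloc p a * Bloc p b) \<le> (1 / real p) ^ a / (1/9)"
    using prodB by (intro divide_left_mono) auto
  then show ?thesis unfolding ga by simp
qed

definition Fd :: "real \<Rightarrow> nat \<Rightarrow> nat \<Rightarrow> real" where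
  "Fd \<delta> p a = \<bar>gloc p a\<bar> * (real p powr -\<delta>) ^ a"

lemma real_factorization:
  assumes "d > 0"
  shows "real d = (\<Prod>p\<in>prime_factors d. real p ^ multiplicity p d)"
proof -
  have "real d = real (\<Prod>p\<in>prime_factors d. p ^ multiplicity p d)"
    using prime_factorization_nat[OF assms] by simp
  also have "\<dots> = (\<Prod>p\<in>prime_factors d. real p ^ multiplicity p d)" by simp
  finally show ?thesis .
qed

lemma powr_pow_swap:
  assumes "p > (0::nat)"
  shows "(real p ^ m) powr c = (real p powr c) ^ m"
proof -
  have "(real p ^ m) powr c = (real p powr real m) powr c" using assms by (simp add: powr_realpow)
  also have "\<dots> = real p powr (real m * c)" by (rule powr_powr)
  also have "\<dots> = (real p powr c) ^ m" using assms by (simp add: powr_power)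
  finally show ?thesis .
qed

lemma g_powr_M:
  assumes d: "d > 0"
  shows "\<bar>g d\<bar> * real d powr -\<delta> = M (Fd \<delta>) d"
proof -
  have "real d powr -\<delta> = (\<Prod>p\<in>prime_factors d. (real p ^ multiplicity p d) powr -\<delta>)"
    unfolding real_factorization[OF d] by (rule prod_powr_distrib)
  also have "\<dots> = (\<Prod>p\<in>prime_factors d. (real p powr -\<delta>) ^ multiplicity p d)"
  proof (rule prod.cong[OF refl])
    fix p assume "p \<in> prime_factors d"
    then have "p > 0" using in_prime_factors_imp_prime prime_gt_0_nat by blast
    then show "(real p ^ multiplicity p d) powr -\<delta> = (real p powr -\<delta>) ^ multiplicity p d"
      by (rule powr_pow_swap)
  qed
  finally have e: "real d powr -\<delta> = (\<Prod>p\<in>prime_factors d. (real p powr -\<delta>) ^ multiplicity p d)" .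
  have "\<bar>g d\<bar> = (\<Prod>p\<in>prime_factors d. \<bar>gloc p (multiplicity p d)\<bar>)"
    unfolding g_def M_def by (rule abs_prod)
  with e show ?thesis unfolding M_def Fd_def by (simp add: prod.distrib)
qed

lemma r_facts:
  assumes p: "prime p" and dl: "\<delta> > 0"
  shows "0 \<le> real p powr -(1+\<delta>)" "real p powr -(1+\<delta>) \<le> 1/2"
        "(1 / real p) * real p powr -\<delta> = real p powr -(1+\<delta>)"
proof -
  have p2: "real p \<ge> 2" using prime_ge_2_nat[OF p] by simp
  show "0 \<le> real p powr -(1+\<delta>)" by simp
  have "real p powr -(1+\<delta>) \<le> real p powr -1"
    using p2 dl by (intro powr_mono) auto
  also have "\<dots> = 1 / real p" using p2 by (simp add: powr_minus_divide)
  also have "\<dots> \<le> 1/2" using p2 by (simp add: field_simps)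
  finally show "real p powr -(1+\<delta>) \<le> 1/2" .
  have ee: "-(1+\<delta>) = (-\<delta>) + (-1)" by simp
  have e1: "real p powr -(1+\<delta>) = real p powr (-\<delta>) * real p powr (-1)" by (simp only: ee powr_add)
  have e2: "real p powr (-1) = 1 / real p" using powr_minus_divide[of "real p" 1] p2 by simp
  show "(1 / real p) * real p powr -\<delta> = real p powr -(1+\<delta>)" unfolding e1 e2 by simp
qed

lemma Fd_le:
  assumes p: "prime p" and dl: "\<delta> > 0" and a: "a \<ge> 1"
  shows "Fd \<delta> p a \<le> 9 * (real p powr -(1+\<delta>)) ^ a"
proof -
  have "Fd \<delta> p a \<le> 9 * (1 / real p) ^ a * (real p powr -\<delta>) ^ a"
    unfolding Fd_def by (intro mult_right_mono gloc_bound[OF p a]) simp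
  also have "\<dots> = 9 * ((1 / real p) * real p powr -\<delta>) ^ a" by (simp only: power_mult_distrib mult.assoc)
  also have "\<dots> = 9 * (real p powr -(1+\<delta>)) ^ a" using r_facts[OF p dl] by simp
  finally show ?thesis .
qed

lemma Fd_0 [simp]: "Fd \<delta> p 0 = 1" by (simp add: Fd_def)

lemma Fd_nonneg: "0 \<le> Fd \<delta> p a" unfolding Fd_def by simp

lemma Fd_local:
  assumes p: "prime p" and dl: "\<delta> > 0"
  shows "(\<Sum>a\<le>A. Fd \<delta> p a) \<le> 1 + 18 * real p powr -(1+\<delta>) - 18 * (real p powr -(1+\<delta>)) ^ Suc A"
proof (induction A)
  case 0
  then show ?case by (simp add: Fd_def)
next
  case (Suc A)
  define r where "r = real p powr -(1+\<delta>)"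
  have r: "0 \<le> r" "r \<le> 1/2" using r_facts[OF p dl] unfolding r_def by auto
  have F: "Fd \<delta> p (Suc A) \<le> 9 * r ^ Suc A" using Fd_le[OF p dl, of "Suc A"] unfolding r_def by simp
  have "r * r ^ Suc A \<le> 1/2 * r ^ Suc A" using r by (intro mult_right_mono) auto
  then show ?case using Suc.IH F unfolding r_def[symmetric] by simp
qed

lemma Fd_local':
  assumes p: "prime p" and dl: "\<delta> > 0"
  shows "(\<Sum>a\<le>A. Fd \<delta> p a) \<le> exp (18 * real p powr -(1+\<delta>))"
proof -
  have "0 \<le> (real p powr -(1+\<delta>)) ^ Suc A" by simp
  then have "(\<Sum>a\<le>A. Fd \<delta> p a) \<le> 1 + 18 * real p powr -(1+\<delta>)"
    using Fd_local[OF p dl, of A] by linarith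
  also have "\<dots> \<le> exp (18 * real p powr -(1+\<delta>))" by (rule exp_ge_add_one_self)
  finally show ?thesis .
qed

lemma Z_summable: "\<delta> > 0 \<Longrightarrow> summable (\<lambda>n. real n powr -(1+\<delta>))"
  by (subst summable_real_powr_iff) simp

lemma small_in_D:
  fixes d N A :: nat
  assumes d: "0 < d" "d < N" and NA: "N \<le> A"
  shows "d \<in> {d. d>0 \<and> prime_factors d \<subseteq> {p. prime p \<and> p < N} \<and> (\<forall>p\<in>{p. prime p \<and> p < N}. multiplicity p d \<le> A)}"
proof -
  have "prime_factors d \<subseteq> {p. prime p \<and> p < N}"
  proof
    fix p assume "p \<in> prime_factors d"
    then have "prime p" "p dvd d" using d by (auto simp: prime_factors_dvd)
    then have "p \<le> d" using d by (auto intro: dvd_imp_le)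
    with \<open>prime p\<close> d show "p \<in> {p. prime p \<and> p < N}" by auto
  qed
  moreover have "multiplicity p d \<le> A" if p: "p \<in> {p. prime p \<and> p < N}" for p
  proof -
    have "p ^ multiplicity p d dvd d" by (rule multiplicity_dvd)
    then have "p ^ multiplicity p d \<le> d" using d by (auto intro: dvd_imp_le)
    moreover have "(2::nat) ^ multiplicity p d \<le> p ^ multiplicity p d"
      using p prime_ge_2_nat by (intro power_mono) auto
    moreover have "multiplicity p d < 2 ^ multiplicity p d" by simp
    ultimately show ?thesis using d NA by linarith
  qed
  ultimately show ?thesis using d by auto
qed

lemma finite_D:
  fixes P :: "nat set"
  assumes "finite P" "\<And>p. p \<in> P \<Longrightarrow> prime p"
  shows "finite {d. d>0 \<and> prime_factors d \<subseteq> P \<and> (\<forall>p\<in>P. multiplicity p d \<le> A)}"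
proof -
  define Q where "Q = (\<Prod>p\<in>P. p ^ A)"
  have Q0: "Q > 0" unfolding Q_def using prod_pp_pos[OF assms, of "\<lambda>_. A"] by simp
  have "{d. d>0 \<and> prime_factors d \<subseteq> P \<and> (\<forall>p\<in>P. multiplicity p d \<le> A)} \<subseteq> {d. d dvd Q}"
  proof
    fix d assume d: "d \<in> {d. d>0 \<and> prime_factors d \<subseteq> P \<and> (\<forall>p\<in>P. multiplicity p d \<le> A)}"
    have "d dvd Q"
    proof (rule multiplicity_le_imp_dvd)
      show "d \<noteq> 0" using d by simp
      fix q :: nat assume q: "prime q"
      have mQ: "multiplicity q Q = (if q \<in> P then A else 0)"
        unfolding Q_def by (rule multiplicity_prod_prime_powers) (use assms q in auto)
      show "multiplicity q d \<le> multiplicity q Q"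
      proof (cases "q \<in> P")
        case True then show ?thesis using d mQ by auto
      next
        case False
        then have "q \<notin> prime_factors d" using d by auto
        then have "multiplicity q d = 0" using q by (auto simp: prime_factors_multiplicity)
        then show ?thesis by simp
      qed
    qed
    then show "d \<in> {d. d dvd Q}" by simp
  qed
  moreover have "finite {d. d dvd Q}" using Q0 by simp
  ultimately show ?thesis by (rule finite_subset)
qed

lemma partial_W:
  assumes dl: "\<delta> > 0"
  shows "(\<Sum>d<N. \<bar>g d\<bar> * real d powr -\<delta>) \<le> exp (18 * (\<Sum>n. real n powr -(1+\<delta>)))"
proof -
  define P where "P = {p. prime p \<and> p < N}"
  define D where "D = {d. d>0 \<and> prime_factors d \<subseteq> P \<and> (\<forall>p\<in>P. multiplicity p d \<le> N)}"
  define f where "f = (\<lambda>d. \<bar>g d\<bar> * real d powr -\<delta>)"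
  have finP: "finite P" unfolding P_def by (rule finite_subset[of _ "{..<N}"]) auto
  have Pprime: "\<And>p. p \<in> P \<Longrightarrow> prime p" unfolding P_def by auto
  have finD: "finite D" unfolding D_def by (rule finite_D[OF finP Pprime])
  have sub: "{d\<in>{..<N}. d>0} \<subseteq> D"
    unfolding D_def P_def using small_in_D[of _ N N] by auto
  have "(\<Sum>d<N. f d) = (\<Sum>d\<in>{d\<in>{..<N}. d>0}. f d)"
    by (rule sum.mono_neutral_right) (auto simp: f_def)
  also have "\<dots> \<le> (\<Sum>d\<in>D. f d)"
    by (rule sum_mono2[OF finD sub]) (auto simp: f_def)
  also have "\<dots> = (\<Sum>d\<in>D. M (Fd \<delta>) d)"
    by (rule sum.cong) (auto simp: D_def f_def g_powr_M)
  also have "\<dots> = (\<Prod>p\<in>P. \<Sum>a\<le>N. Fd \<delta> p a)"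
    unfolding D_def using L1[OF finP Pprime, of "Fd \<delta>" "\<lambda>_. N"] by simp
  also have "\<dots> \<le> (\<Prod>p\<in>P. exp (18 * real p powr -(1+\<delta>)))"
  proof (rule prod_mono)
    fix i assume i: "i \<in> P"
    show "0 \<le> (\<Sum>a\<le>N. Fd \<delta> i a) \<and> (\<Sum>a\<le>N. Fd \<delta> i a) \<le> exp (18 * real i powr -(1+\<delta>))"
      using Fd_local'[OF Pprime[OF i] dl, of N] by (auto intro!: sum_nonneg Fd_nonneg)
  qed
  also have "\<dots> = exp (\<Sum>p\<in>P. 18 * real p powr -(1+\<delta>))" by (simp add: exp_sum finP)
  also have "\<dots> \<le> exp (18 * (\<Sum>n. real n powr -(1+\<delta>)))"
  proof -
    have "(\<Sum>p\<in>P. real p powr -(1+\<delta>)) \<le> (\<Sum>n. real n powr -(1+\<delta>))"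
      by (rule sum_le_suminf[OF Z_summable[OF dl] finP]) simp
    then show ?thesis by (simp add: sum_distrib_left[symmetric])
  qed
  finally show ?thesis unfolding f_def .
qed

lemma summable_W:
  assumes dl: "\<delta> > 0"
  shows "summable (\<lambda>d. \<bar>g d\<bar> * real d powr -\<delta>)"
  by (rule summableI_nonneg_bounded[OF _ partial_W[OF dl]]) simp

lemma M_pp:
  assumes p: "prime p"
  shows "M F (p ^ a) = (if a = 0 then 1 else F p a)"
proof (cases "a = 0")
  case True then show ?thesis by (simp add: M_def)
next
  case False
  then have "prime_factors (p ^ a) = {p}"
    using p by (simp add: prime_factorization_prime_power)
  moreover have "multiplicity p (p ^ a) = a"
    using p prime_gt_1_nat[OF p] by (simp add: multiplicity_same_power')
  ultimately show ?thesis using False by (simp add: M_def)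
qed

lemma beta_pp:
  assumes p: "prime p"
  shows "beta (p ^ a) = real p ^ a * Bloc p a"
proof -
  have "p ^ a > 0" using p prime_gt_0_nat by simp
  then have "beta (p ^ a) = real (p ^ a) * M Bloc (p ^ a)" by (rule beta_M)
  then show ?thesis using M_pp[OF p, of Bloc a] by (cases "a = 0") auto
qed

lemma u_eq:
  assumes p: "prime p"
  shows "1 / beta (p ^ a) = hloc p a * (1 / real p) ^ a"
  unfolding beta_pp[OF p] hloc_def by (simp add: power_one_over)

lemma abel_id:
  "(\<Sum>a\<le>A. gloc p a * x ^ a) = (1 - x) * (\<Sum>a<A. hloc p a * x ^ a) + hloc p A * x ^ A"
proof (induction A)
  case 0 then show ?case by simp
next
  case (Suc A)
  have "(\<Sum>a\<le>Suc A. gloc p a * x ^ a) = (\<Sum>a\<le>A. gloc p a * x ^ a) + (hloc p (Suc A) - hloc p A) * x ^ Suc A"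
    by (simp add: gloc_def)
  also have "\<dots> = (1 - x) * (\<Sum>a<Suc A. hloc p a * x ^ a) + hloc p (Suc A) * x ^ Suc A"
    unfolding Suc.IH by (simp add: algebra_simps)
  finally show ?case .
qed

definition Gloc :: "nat \<Rightarrow> nat \<Rightarrow> real" where
  "Gloc p a = gloc p a * (1 / real p) ^ a"

lemma Gloc_0 [simp]: "Gloc p 0 = 1" by (simp add: Gloc_def)

lemma K1_loc:
  assumes p: "prime p"
  shows "(\<lambda>A. \<Sum>a\<le>A. Gloc p a) \<longlonglongrightarrow> K1_factor p"
    and "1 \<le> K1_factor p"
proof -
  define x where "x = 1 / real p"
  define u where "u = (\<lambda>a. hloc p a * x ^ a)"
  have p2: "real p \<ge> 2" using prime_ge_2_nat[OF p] by simp
  have x: "0 < x" "x \<le> 1/2" unfolding x_def using p2 by (auto simp: field_simps)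
  have u_nn: "0 \<le> u a" for a unfolding u_def
    by (intro mult_nonneg_nonneg) (use hloc_bounds[OF p, of a] x in auto)
  have sumu: "summable u"
  proof (rule summable_comparison_test')
    show "summable (\<lambda>a. 3 * x ^ a)" using x by (intro summable_mult summable_geometric) auto
    fix a :: nat
    show "norm (u a) \<le> 3 * x ^ a"
      unfolding u_def using hloc_bounds[OF p, of a] x by (auto intro!: mult_right_mono)
  qed
  have ub: "\<And>a. u a = 1 / beta (p ^ a)" unfolding u_def x_def by (simp add: u_eq[OF p])
  have u0: "u 0 = 1" unfolding u_def by simp
  have K: "K1_factor p = (1 - x) * suminf u"
  proof -
    have "(\<Sum>a. 1 / beta (p ^ Suc a)) = suminf u - u 0"
      unfolding ub[symmetric] by (rule suminf_split_head[OF sumu])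
    then show ?thesis unfolding K1_factor_def x_def u0 by simp
  qed
  have "(\<lambda>A. (1 - x) * (\<Sum>a<A. u a) + u A) \<longlonglongrightarrow> (1 - x) * suminf u + 0"
    by (intro tendsto_intros summable_LIMSEQ sumu summable_LIMSEQ_zero)
  moreover have "(\<Sum>a\<le>A. Gloc p a) = (1 - x) * (\<Sum>a<A. u a) + u A" for A
    unfolding Gloc_def u_def x_def[symmetric] by (rule abel_id)
  ultimately show "(\<lambda>A. \<Sum>a\<le>A. Gloc p a) \<longlonglongrightarrow> K1_factor p" unfolding K by simp
  have "(\<Sum>a\<in>{0,1}. u a) \<le> suminf u"
    by (rule sum_le_suminf[OF sumu]) (auto intro: u_nn)
  then have s: "1 + u 1 \<le> suminf u" using u0 by simp
  have B1: "Bloc p 1 = 1 - x" unfolding Bloc_def x_def by simp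
  have u1: "u 1 = x / (1 - x)" unfolding u_def hloc_def B1 by simp
  have "1 = (1 - x) * (1 + x / (1 - x))" using x by (simp add: field_simps)
  also have "\<dots> \<le> (1 - x) * suminf u" using s x u1 by (intro mult_left_mono) auto
  finally show "1 \<le> K1_factor p" unfolding K .
qed

definition G :: "nat \<Rightarrow> real" where "G d = g d / real d"

lemma G_M:
  assumes d: "d > 0"
  shows "G d = M Gloc d"
proof -
  have "M Gloc d = (\<Prod>p\<in>prime_factors d. gloc p (multiplicity p d) / real p ^ multiplicity p d)"
    unfolding M_def Gloc_def by (simp add: power_one_over)
  also have "\<dots> = g d / real d"
    unfolding real_factorization[OF d] g_def M_def by (rule prod_dividef)
  finally show ?thesis unfolding G_def by simp
qed

lemma G_0 [simp]: "G 0 = 0" by (simp add: G_def)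

lemma absG_le: "\<bar>G d\<bar> \<le> \<bar>g d\<bar> * real d powr -\<delta>" if "\<delta> \<le> 1" for \<delta> :: real
proof (cases "d = 0")
  case True then show ?thesis by simp
next
  case False
  then have d1: "real d \<ge> 1" by simp
  have "real d powr -1 \<le> real d powr -\<delta>" using that d1 by (intro powr_mono) auto
  moreover have "real d powr -1 = 1 / real d" using d1 by (simp add: powr_minus_divide)
  ultimately have "1 / real d \<le> real d powr -\<delta>" by simp
  then have "\<bar>g d\<bar> * (1 / real d) \<le> \<bar>g d\<bar> * real d powr -\<delta>" by (intro mult_left_mono) auto
  then show ?thesis unfolding G_def using d1 by (simp add: abs_divide)
qed

lemma summable_absG: "summable (\<lambda>d. \<bar>G d\<bar>)"
proof (rule summable_comparison_test'[OF summable_W[of "1/2"]])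
  fix n :: nat show "norm \<bar>G n\<bar> \<le> \<bar>g n\<bar> * real n powr -(1/2)" using absG_le[of "1/2" n] by simp
qed simp

lemma summable_G: "summable G"
  by (rule summable_comparison_test'[OF summable_absG]) simp

lemma tail_le:
  fixes f :: "nat \<Rightarrow> real"
  assumes "summable f" "\<And>n. 0 \<le> f n" "finite E" "\<And>d. d \<in> E \<Longrightarrow> m \<le> d"
  shows "(\<Sum>d\<in>E. f d) \<le> (\<Sum>k. f (k + m))"
proof -
  have inj: "inj_on (\<lambda>d. d - m) E" using assms(4) by (auto simp: inj_on_def) (metis le_add_diff_inverse2)
  have "(\<Sum>d\<in>E. f d) = (\<Sum>d\<in>E. f ((d - m) + m))"
    by (rule sum.cong) (use assms(4) in auto)
  also have "\<dots> = (\<Sum>k\<in>(\<lambda>d. d - m) ` E. f (k + m))"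
    by (rule sum.reindex[OF inj, symmetric, unfolded comp_def])
  also have "\<dots> \<le> (\<Sum>k. f (k + m))"
    by (rule sum_le_suminf) (use assms summable_ignore_initial_segment in auto)
  finally show ?thesis .
qed

lemma euler_approx:
  "\<bar>(\<Prod>i\<le>N. if prime i then K1_factor i else 1) - (\<Sum>d<Suc N. G d)\<bar> \<le> (\<Sum>k. \<bar>G (k + Suc N)\<bar>)"
proof -
  define P where "P = {p. prime p \<and> p < Suc N}"
  define D where "D = (\<lambda>A. {d. d>0 \<and> prime_factors d \<subseteq> P \<and> (\<forall>p\<in>P. multiplicity p d \<le> A)})"
  define S where "S = {d\<in>{..<Suc N}. d>0}"
  define s where "s = (\<Sum>d<Suc N. G d)"
  have finP: "finite P" unfolding P_def by (rule finite_subset[of _ "{..<Suc N}"]) auto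
  have Pprime: "\<And>p. p \<in> P \<Longrightarrow> prime p" unfolding P_def by auto
  have finD: "finite (D A)" for A unfolding D_def by (rule finite_D[OF finP Pprime])
  have PP: "(\<Prod>i\<le>N. if prime i then K1_factor i else 1) = (\<Prod>p\<in>P. K1_factor p)"
  proof -
    have "P = {i\<in>{..N}. prime i}" unfolding P_def by auto
    then show ?thesis by (simp only:) (rule prod.inter_filter[symmetric], simp)
  qed
  have s: "s = (\<Sum>d\<in>S. G d)" unfolding s_def S_def by (rule sum.mono_neutral_right) (auto, metis G_0 neq0_conv)
  have lim: "(\<lambda>A. \<Prod>p\<in>P. \<Sum>a\<le>A. Gloc p a) \<longlonglongrightarrow> (\<Prod>p\<in>P. K1_factor p)"
    by (intro tendsto_prod K1_loc(1) Pprime)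
  have Q: "(\<Prod>p\<in>P. \<Sum>a\<le>A. Gloc p a) = (\<Sum>d\<in>D A. G d)" for A
  proof -
    have "(\<Sum>d\<in>D A. G d) = (\<Sum>d\<in>D A. M Gloc d)" by (rule sum.cong) (auto simp: D_def G_M)
    also have "\<dots> = (\<Prod>p\<in>P. \<Sum>a\<le>A. Gloc p a)"
      unfolding D_def using L1[OF finP Pprime, of Gloc "\<lambda>_. A"] by simp
    finally show ?thesis by simp
  qed
  have bound: "\<bar>(\<Prod>p\<in>P. \<Sum>a\<le>A. Gloc p a) - s\<bar> \<le> (\<Sum>k. \<bar>G (k + Suc N)\<bar>)" if A: "A \<ge> Suc N" for A
  proof -
    have sub: "S \<subseteq> D A" unfolding S_def D_def P_def using small_in_D[of _ "Suc N" A] A by auto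
    have "(\<Prod>p\<in>P. \<Sum>a\<le>A. Gloc p a) - s = (\<Sum>d\<in>D A - S. G d)"
      unfolding Q s by (simp add: sum_diff[OF finD sub])
    also have "\<bar>\<dots>\<bar> \<le> (\<Sum>d\<in>D A - S. \<bar>G d\<bar>)" by (rule sum_abs)
    also have "\<dots> \<le> (\<Sum>k. \<bar>G (k + Suc N)\<bar>)"
    proof (rule tail_le[OF summable_absG])
      show "finite (D A - S)" using finD by simp
      fix d assume "d \<in> D A - S"
      then show "Suc N \<le> d" unfolding D_def S_def by auto
    qed simp
    finally show ?thesis .
  qed
  have "(\<lambda>A. \<bar>(\<Prod>p\<in>P. \<Sum>a\<le>A. Gloc p a) - s\<bar>) \<longlonglongrightarrow> \<bar>(\<Prod>p\<in>P. K1_factor p) - s\<bar>"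
    by (intro tendsto_intros lim)
  then have "\<bar>(\<Prod>p\<in>P. K1_factor p) - s\<bar> \<le> (\<Sum>k. \<bar>G (k + Suc N)\<bar>)"
    by (rule LIMSEQ_le_const2) (use bound in auto)
  then show ?thesis unfolding PP s_def .
qed

lemma euler_product:
  "((\<lambda>p::nat. if prime p then K1_factor p else 1) has_prod (\<Sum>d. G d)) \<and> (\<Sum>d. G d) \<ge> 1"
proof -
  define PP where "PP = (\<lambda>N. \<Prod>i\<le>N. if prime i then K1_factor i else 1)"
  define T where "T = (\<lambda>N. \<Sum>k. \<bar>G (k + Suc N)\<bar>)"
  have T: "T N = (\<Sum>d. \<bar>G d\<bar>) - (\<Sum>d<Suc N. \<bar>G d\<bar>)" for N
    unfolding T_def using suminf_split_initial_segment[OF summable_absG, of "Suc N"] by simp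
  have "(\<lambda>N. \<Sum>d<Suc N. \<bar>G d\<bar>) \<longlonglongrightarrow> (\<Sum>d. \<bar>G d\<bar>)"
    by (rule LIMSEQ_Suc[OF summable_LIMSEQ[OF summable_absG]])
  then have "(\<lambda>N. (\<Sum>d. \<bar>G d\<bar>) - (\<Sum>d<Suc N. \<bar>G d\<bar>)) \<longlonglongrightarrow> (\<Sum>d. \<bar>G d\<bar>) - (\<Sum>d. \<bar>G d\<bar>)"
    by (intro tendsto_intros)
  then have T0: "T \<longlonglongrightarrow> 0" unfolding T by simp
  have ev: "\<forall>N. norm (PP N - (\<Sum>d<Suc N. G d)) \<le> T N"
  proof
    fix N show "norm (PP N - (\<Sum>d<Suc N. G d)) \<le> T N"
      unfolding PP_def T_def real_norm_def by (rule euler_approx)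
  qed
  have "(\<lambda>N. PP N - (\<Sum>d<Suc N. G d)) \<longlonglongrightarrow> 0"
    by (rule Lim_null_comparison[OF always_eventually[OF ev] T0])
  moreover have "(\<lambda>N. \<Sum>d<Suc N. G d) \<longlonglongrightarrow> (\<Sum>d. G d)"
    by (rule LIMSEQ_Suc[OF summable_LIMSEQ[OF summable_G]])
  ultimately have "(\<lambda>N. (PP N - (\<Sum>d<Suc N. G d)) + (\<Sum>d<Suc N. G d)) \<longlonglongrightarrow> 0 + (\<Sum>d. G d)"
    by (intro tendsto_intros)
  then have lim: "PP \<longlonglongrightarrow> (\<Sum>d. G d)" by simp
  have ge: "1 \<le> PP N" for N unfolding PP_def by (rule prod_ge_1) (auto intro: K1_loc(2))
  have K1: "1 \<le> (\<Sum>d. G d)" by (rule LIMSEQ_le_const[OF lim]) (use ge in auto)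
  have "raw_has_prod (\<lambda>p::nat. if prime p then K1_factor p else 1) 0 (\<Sum>d. G d)"
  proof -
    have eqPP: "(\<lambda>n. \<Prod>i\<le>n. (\<lambda>p::nat. if prime p then K1_factor p else 1) (i + 0)) = PP"
      unfolding PP_def by (intro ext prod.cong refl) auto
    show ?thesis unfolding raw_has_prod_def eqPP using lim K1 by simp
  qed
  then show ?thesis using K1 unfolding has_prod_def by simp
qed

lemma interchange:
  "(\<Sum>n\<in>{1..N}. 1 / beta n) = (\<Sum>d\<in>{1..N}. G d * harm (N div d))"
proof -
  have "(\<Sum>n\<in>{1..N}. 1 / beta n) = (\<Sum>n\<in>{1..N}. \<Sum>d\<in>{d. d dvd n}. g d / real n)"
    by (rule sum.cong[OF refl]) (simp add: inv_beta sum_divide_distrib)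
  also have "\<dots> = (\<Sum>(n,d)\<in>(SIGMA n:{1..N}. {d. d dvd n}). g d / real n)"
    by (rule sum.Sigma) auto
  also have "\<dots> = (\<Sum>(d,k)\<in>(SIGMA d:{1..N}. {1..N div d}). g d / (real d * real k))"
  proof (rule sum.reindex_bij_witness[where j="\<lambda>(n,d). (d, n div d)" and i="\<lambda>(d,k). (d*k, d)"])
    fix a assume a: "a \<in> (SIGMA n:{1..N}. {d. d dvd n})"
    obtain n d where nd: "a = (n, d)" by (cases a)
    with a have n: "1 \<le> n" "n \<le> N" "d dvd n" by auto
    then obtain k where k: "n = d * k" by auto
    with n have d0: "d > 0" "k > 0" by auto
    from k d0 show "(\<lambda>(d,k). (d*k, d)) ((\<lambda>(n,d). (d, n div d)) a) = a" unfolding nd by simp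
    have "d \<le> n" using n d0 k by simp
    moreover have "k \<le> N div d"
    proof -
      have "k = n div d" using k d0 by simp
      also have "\<dots> \<le> N div d" using n(2) by (rule div_le_mono)
      finally show ?thesis .
    qed
    ultimately have dN: "d \<le> N" "k \<le> N div d" using n(2) by linarith+
    have "n div d = k" using k d0 by simp
    then show "(\<lambda>(n,d). (d, n div d)) a \<in> (SIGMA d:{1..N}. {1..N div d})"
      unfolding nd using dN d0 by auto
    show "(\<lambda>(d,k). g d / (real d * real k)) ((\<lambda>(n,d). (d, n div d)) a) = (\<lambda>(n,d). g d / real n) a"
      unfolding nd using k d0 by simp
  next
    fix b assume b: "b \<in> (SIGMA d:{1..N}. {1..N div d})"
    obtain d k where dk: "b = (d, k)" by (cases b)
    with b have d: "1 \<le> d" "d \<le> N" "1 \<le> k" "k \<le> N div d" by auto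
    have "d * k \<le> d * (N div d)" using d(4) by (rule mult_le_mono2)
    also have "\<dots> \<le> N" by (rule times_div_less_eq_dividend)
    finally have "d * k \<le> N" .
    then show "(\<lambda>(d,k). (d*k, d)) b \<in> (SIGMA n:{1..N}. {d. d dvd n})" unfolding dk using d by auto
    show "(\<lambda>(n,d). (d, n div d)) ((\<lambda>(d,k). (d*k, d)) b) = b" unfolding dk using d by simp
  qed
  also have "\<dots> = (\<Sum>d\<in>{1..N}. \<Sum>k\<in>{1..N div d}. g d / (real d * real k))"
    by (rule sum.Sigma[symmetric]) auto
  also have "\<dots> = (\<Sum>d\<in>{1..N}. G d * harm (N div d))"
    unfolding G_def harm_def by (rule sum.cong[OF refl]) (simp add: sum_distrib_left divide_inverse mult.assoc)
  finally show ?thesis .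
qed

lemma ln_succ:
  assumes m: "m \<ge> 1"
  shows "0 \<le> ln (real (Suc m)) - ln (real m)" "ln (real (Suc m)) - ln (real m) \<le> 1 / real m"
proof -
  have m1: "real m \<ge> 1" using m by simp
  have q: "real (Suc m) / real m = 1 + 1 / real m" using m1 by (simp add: field_simps)
  have "ln (real (Suc m) / real m) = ln (real (Suc m)) - ln (real m)" by (rule ln_divide_pos) (use m1 in auto)
  then have l: "ln (real (Suc m)) - ln (real m) = ln (1 + 1 / real m)" unfolding q by simp
  have l1: "0 \<le> ln (1 + 1 / real m)" using m1 by simp
  have l2: "ln (1 + 1 / real m) \<le> 1 / real m" by (rule ln_add_one_self_le_self) simp
  show "0 \<le> ln (real (Suc m)) - ln (real m)" using l l1 by linarith
  show "ln (real (Suc m)) - ln (real m) \<le> 1 / real m" using l l2 by linarith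
qed

lemma ln_succ_le:
  assumes m: "m \<ge> 1"
  shows "ln (real (Suc m)) \<le> ln (real m) + 1 / real m"
  using ln_succ(2)[OF m] by linarith

lemma harm_est:
  assumes m: "m \<ge> 1"
  shows "\<bar>harm m - ln (real m) - euler_mascheroni\<bar> \<le> 1 / real m"
proof -
  have b: "euler_mascheroni \<in> {harm m - ln (real (Suc m)) + inverse (real (2*(m+1)))..harm m - ln (real (Suc m)) + inverse (real (2*m))}"
    using euler_mascheroni_bounds[OF m] by simp
  then have b1: "harm m - ln (real (Suc m)) + inverse (real (2*(m+1))) \<le> euler_mascheroni"
    and b2: "euler_mascheroni \<le> harm m - ln (real (Suc m)) + inverse (real (2*m))"
    unfolding atLeastAtMost_iff by blast+
  have m1: "real m \<ge> 1" using m by simp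
  have i1: "0 \<le> inverse (real (2*(m+1)))" by simp
  have i2: "inverse (real (2*m)) \<le> 1 / real m" using m1 by (simp add: field_simps)
  note l = ln_succ[OF m]
  have "- (1 / real m) \<le> harm m - ln (real m) - euler_mascheroni" using b2 i2 l by linarith
  moreover have "harm m - ln (real m) - euler_mascheroni \<le> 1 / real m" using b1 i1 l by linarith
  ultimately show ?thesis by (intro abs_leI) linarith+
qed

lemma floor_div_facts:
  fixes x :: real
  assumes x: "x \<ge> 1" and d: "d \<in> {1..nat \<lfloor>x\<rfloor>}"
  defines "m \<equiv> nat \<lfloor>x\<rfloor> div d"
  shows "m \<ge> 1" "real m \<le> x / real d" "x / real d < real m + 1"
proof -
  define N where "N = nat \<lfloor>x\<rfloor>"
  have fl0: "0 \<le> \<lfloor>x\<rfloor>" using x by simp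
  have rN: "real N = real_of_int \<lfloor>x\<rfloor>" unfolding N_def using fl0 by simp
  have N1: "real N \<le> x" unfolding rN by simp
  have N2: "x < real N + 1" unfolding rN by simp
  have d1: "1 \<le> d" "d \<le> N" using d unfolding N_def by auto
  have mN: "m = N div d" unfolding m_def N_def ..
  have "0 < N div d" using d1 by (simp add: div_greater_zero_iff)
  then show "m \<ge> 1" unfolding mN by simp
  have "d * m \<le> N" unfolding mN by (rule times_div_less_eq_dividend)
  then have "real (d * m) \<le> real N" by (rule of_nat_mono)
  then have "real d * real m \<le> x" using N1 by simp
  then show "real m \<le> x / real d" using d1 by (simp add: field_simps)
  have "d * m + N mod d = N" unfolding mN by (rule mult_div_mod_eq)
  moreover have "N mod d < d" using d1 by simp
  ultimately have "N + 1 \<le> d * m + d" by linarith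
  then have "real (N + 1) \<le> real (d * m + d)" by (rule of_nat_mono)
  then have "real N + 1 \<le> real d * real m + real d" by simp
  then have "x < real d * (real m + 1)" using N2 by (simp add: algebra_simps)
  then show "x / real d < real m + 1" using d1 by (simp add: field_simps)
qed

lemma harm_floor_est:
  fixes x :: real
  assumes x: "x \<ge> 1" and d: "d \<in> {1..nat \<lfloor>x\<rfloor>}"
  shows "\<bar>harm (nat \<lfloor>x\<rfloor> div d) - ln (x / real d) - euler_mascheroni\<bar> \<le> 4 * real d / x"
proof -
  define m where "m = nat \<lfloor>x\<rfloor> div d"
  note f = floor_div_facts[OF x d, folded m_def]
  have d1: "real d \<ge> 1" using d by auto
  have m1: "real m \<ge> 1" using f(1) by simp
  have h: "\<bar>harm m - ln (real m) - euler_mascheroni\<bar> \<le> 1 / real m" by (rule harm_est[OF f(1)])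
  then have h1: "- (1 / real m) \<le> harm m - ln (real m) - euler_mascheroni"
    and h2: "harm m - ln (real m) - euler_mascheroni \<le> 1 / real m"
    using abs_le_D1[OF h] abs_le_D2[OF h] by linarith+
  have xd: "0 < x / real d" using x d1 by simp
  have l0: "ln (real m) \<le> ln (x / real d)" by (rule ln_mono[OF f(2)]) (use m1 in simp)
  have "x / real d \<le> real (Suc m)" using f(3) by simp
  then have "ln (x / real d) \<le> ln (real (Suc m))" by (rule ln_mono) (rule xd)
  then have l1: "ln (x / real d) \<le> ln (real m) + 1 / real m" using ln_succ_le[OF f(1)] by linarith
  have "x / real d < 2 * real m" using f(3) m1 by linarith
  then have "x < 2 * real m * real d" using d1 by (simp add: field_simps)
  then have mm: "1 / real m \<le> 2 * real d / x" using m1 x d1 by (simp add: field_simps)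
  have "- (4 * real d / x) \<le> harm m - ln (x / real d) - euler_mascheroni" using h1 l1 mm by linarith
  moreover have "harm m - ln (x / real d) - euler_mascheroni \<le> 4 * real d / x"
  proof -
    have e4: "4 * real d / x = 2 * (2 * real d / x)" by simp
    have "0 \<le> 2 * real d / x" using x d1 by simp
    then show ?thesis using h2 l0 mm e4 by linarith
  qed
  ultimately show ?thesis unfolding m_def[symmetric] by (intro abs_leI) linarith+
qed

definition W :: "real \<Rightarrow> real" where "W \<delta> = (\<Sum>d. \<bar>g d\<bar> * real d powr -\<delta>)"

lemma W_nonneg: "\<delta> > 0 \<Longrightarrow> 0 \<le> W \<delta>"
  unfolding W_def by (rule suminf_nonneg[OF summable_W]) auto

lemma shifted_le:
  fixes f :: "nat \<Rightarrow> real"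
  assumes "summable f" "\<And>n. 0 \<le> f n"
  shows "(\<Sum>k. f (k + m)) \<le> suminf f"
proof -
  have "suminf f = (\<Sum>k. f (k + m)) + (\<Sum>i<m. f i)" by (rule suminf_split_initial_segment[OF assms(1)])
  moreover have "0 \<le> (\<Sum>i<m. f i)" using assms(2) by (simp add: sum_nonneg)
  ultimately show ?thesis by linarith
qed

lemma ln_le_powr:
  fixes x \<delta> :: real
  assumes x: "x \<ge> 1" and dl: "\<delta> > 0"
  shows "ln x \<le> x powr \<delta> / \<delta>"
proof -
  have "ln (x powr \<delta>) \<le> x powr \<delta> - 1" using x by (intro ln_le_minus_one) simp
  then have "\<delta> * ln x \<le> x powr \<delta>" using x by simp
  then show ?thesis using dl by (simp add: field_simps)
qed

lemma PW:
  assumes d: "d \<ge> 1" and dl: "\<delta> > 0"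
  shows "\<bar>G d\<bar> * (1 + 2 * ln (real d)) \<le> (1 + 2 / \<delta>) * (\<bar>g d\<bar> * real d powr -\<delta>) * real d powr (2 * \<delta> - 1)"
proof -
  define r where "r = real d"
  define A where "A = \<bar>g d\<bar>"
  have r1: "r \<ge> 1" unfolding r_def using d by simp
  have A0: "A \<ge> 0" unfolding A_def by simp
  have p1: "1 \<le> r powr \<delta>" using r1 dl by (intro ge_one_powr_ge_zero) auto
  have l: "ln r \<le> r powr \<delta> / \<delta>" by (rule ln_le_powr[OF r1 dl])
  have "2 * ln r \<le> 2 * (r powr \<delta> / \<delta>)" using l by simp
  also have "\<dots> = (2 / \<delta>) * r powr \<delta>" by simp
  finally have b: "1 + 2 * ln r \<le> (1 + 2 / \<delta>) * r powr \<delta>" using p1 by (simp add: algebra_simps)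
  have ex: "-\<delta> + (2 * \<delta> - 1) = \<delta> + -1" by simp
  have e: "r powr -\<delta> * r powr (2 * \<delta> - 1) = r powr \<delta> / r"
  proof -
    have "r powr -\<delta> * r powr (2 * \<delta> - 1) = r powr (-\<delta> + (2 * \<delta> - 1))" by (simp only: powr_add)
    also have "\<dots> = r powr (\<delta> + -1)" by (simp only: ex)
    also have "\<dots> = r powr \<delta> * r powr -1" by (simp only: powr_add)
    also have "r powr -1 = 1 / r" using r1 by (simp add: powr_minus_divide)
    finally show ?thesis by simp
  qed
  have Gd: "\<bar>G d\<bar> = A / r" unfolding G_def A_def r_def by (simp add: abs_divide)
  have "\<bar>G d\<bar> * (1 + 2 * ln r) \<le> A / r * ((1 + 2 / \<delta>) * r powr \<delta>)"
    unfolding Gd using b A0 r1 by (intro mult_left_mono) auto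
  also have "\<dots> = (1 + 2 / \<delta>) * A * (r powr \<delta> / r)" by simp
  also have "\<dots> = (1 + 2 / \<delta>) * (A * r powr -\<delta>) * r powr (2 * \<delta> - 1)"
    unfolding e[symmetric] by (simp add: mult.assoc)
  finally show ?thesis unfolding A_def r_def .
qed

lemma ln_G_nonneg: "0 \<le> \<bar>G d\<bar> * (1 + 2 * ln (real d))"
proof (cases "d = 0")
  case True then show ?thesis by simp
next
  case False then have "0 \<le> ln (real d)" by simp
  then show ?thesis by simp
qed

lemma summable_Gln: "summable (\<lambda>d. \<bar>G d\<bar> * (1 + 2 * ln (real d)))"
proof (rule summable_comparison_test'[where N=1])
  show "summable (\<lambda>d. (1 + 2 / (1/4)) * (\<bar>g d\<bar> * real d powr -(1/4)))"
    by (intro summable_mult summable_W) simp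
  fix d :: nat assume d: "d \<ge> 1"
  have "real d powr (2 * (1/4) - 1) \<le> real d powr 0" using d by (intro powr_mono) auto
  then have pw: "real d powr (2 * (1/4) - 1) \<le> 1" using d by simp
  have "\<bar>G d\<bar> * (1 + 2 * ln (real d)) \<le> (1 + 2 / (1/4)) * (\<bar>g d\<bar> * real d powr -(1/4)) * real d powr (2 * (1/4) - 1)"
    by (rule PW[OF d]) simp
  also have "\<dots> \<le> (1 + 2 / (1/4)) * (\<bar>g d\<bar> * real d powr -(1/4)) * 1"
    by (intro mult_left_mono pw) simp
  finally show "norm (\<bar>G d\<bar> * (1 + 2 * ln (real d))) \<le> (1 + 2 / (1/4)) * (\<bar>g d\<bar> * real d powr -(1/4))"
    using ln_G_nonneg[of d] by simp
qed

lemma gamma_bounds: "0 \<le> (euler_mascheroni::real)" "(euler_mascheroni::real) \<le> 1"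
  using euler_mascheroni_pos euler_mascheroni_less_13_over_22 by auto

lemma summable_GL: "summable (\<lambda>d. G d * (euler_mascheroni - ln (real d)))"
proof (rule summable_comparison_test'[OF summable_Gln, where N=1])
  fix d :: nat assume d: "d \<ge> 1"
  have l: "0 \<le> ln (real d)" using d by simp
  have "\<bar>euler_mascheroni - ln (real d)\<bar> \<le> 1 + 2 * ln (real d)" using gamma_bounds l by auto
  then have "\<bar>G d\<bar> * \<bar>euler_mascheroni - ln (real d)\<bar> \<le> \<bar>G d\<bar> * (1 + 2 * ln (real d))"
    by (intro mult_left_mono) auto
  then show "norm (G d * (euler_mascheroni - ln (real d))) \<le> \<bar>G d\<bar> * (1 + 2 * ln (real d))"
    by (simp add: abs_mult)
qed

lemma abs_suminf_le:
  fixes h H :: "nat \<Rightarrow> real"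
  assumes "\<And>k. \<bar>h k\<bar> \<le> H k" "summable H"
  shows "\<bar>suminf h\<bar> \<le> suminf H"
proof -
  have sh: "summable h" by (rule summable_comparison_test'[OF assms(2)]) (use assms(1) in simp)
  have "suminf h \<le> suminf H" by (rule suminf_le[OF _ sh assms(2)]) (use assms(1) abs_le_D1 in blast)
  moreover have "- suminf h \<le> suminf H"
  proof -
    have "- suminf h = (\<Sum>k. - h k)" by (rule suminf_minus[OF sh, symmetric])
    also have "\<dots> \<le> suminf H"
      by (rule suminf_le[OF _ summable_minus[OF sh] assms(2)]) (use assms(1) abs_le_D2 in blast)
    finally show ?thesis .
  qed
  ultimately show ?thesis by linarith
qed

lemma le_floor_real:
  fixes x :: real
  assumes "d \<le> nat \<lfloor>x\<rfloor>" "x \<ge> 0"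
  shows "real d \<le> x"
proof -
  have "0 \<le> \<lfloor>x\<rfloor>" using assms by simp
  then have "int d \<le> \<lfloor>x\<rfloor>" using assms(1) by linarith
  then show ?thesis by (simp add: le_floor_iff)
qed

lemma gt_floor_real:
  fixes x :: real
  assumes "nat \<lfloor>x\<rfloor> < d" "x \<ge> 0"
  shows "x < real d"
proof -
  have "0 \<le> \<lfloor>x\<rfloor>" using assms by simp
  then have "\<lfloor>x\<rfloor> < int d" using assms(1) by linarith
  then show ?thesis by (simp add: floor_less_iff)
qed

lemma tail_bound:
  fixes x \<delta> :: real
  assumes x: "x \<ge> 1" and dl: "0 < \<delta>" "\<delta> \<le> 1/2"
  shows "(\<Sum>k. \<bar>G (k + Suc (nat \<lfloor>x\<rfloor>))\<bar> * (1 + 2 * ln (real (k + Suc (nat \<lfloor>x\<rfloor>)))))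
           \<le> (1 + 2/\<delta>) * W \<delta> * x powr (2 * \<delta> - 1)"
proof -
  define N where "N = nat \<lfloor>x\<rfloor>"
  define f where "f = (\<lambda>d. \<bar>g d\<bar> * real d powr -\<delta>)"
  define c where "c = (1 + 2/\<delta>) * x powr (2 * \<delta> - 1)"
  have sf: "summable f" unfolding f_def by (rule summable_W[OF dl(1)])
  have fnn: "0 \<le> f d" for d unfolding f_def by simp
  have c0: "0 \<le> c" unfolding c_def using dl by simp
  have pt: "\<bar>G (k + Suc N)\<bar> * (1 + 2 * ln (real (k + Suc N))) \<le> c * f (k + Suc N)" for k
  proof -
    define d where "d = k + Suc N"
    have xd: "x < real d" unfolding d_def N_def by (rule gt_floor_real) (use x in auto)
    have "\<bar>G d\<bar> * (1 + 2 * ln (real d)) \<le> (1 + 2/\<delta>) * f d * real d powr (2 * \<delta> - 1)"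
      unfolding f_def by (rule PW) (use dl in \<open>auto simp: d_def\<close>)
    also have "\<dots> \<le> (1 + 2/\<delta>) * f d * x powr (2 * \<delta> - 1)"
    proof (rule mult_left_mono)
      show "real d powr (2 * \<delta> - 1) \<le> x powr (2 * \<delta> - 1)"
        by (rule powr_mono2') (use dl x xd in auto)
      show "0 \<le> (1 + 2/\<delta>) * f d" using dl fnn[of d] by simp
    qed
    also have "\<dots> = c * f d" unfolding c_def by simp
    finally show ?thesis unfolding d_def .
  qed
  have "(\<Sum>k. \<bar>G (k + Suc N)\<bar> * (1 + 2 * ln (real (k + Suc N)))) \<le> (\<Sum>k. c * f (k + Suc N))"
  proof (rule suminf_le[OF pt])
    show "summable (\<lambda>k. \<bar>G (k + Suc N)\<bar> * (1 + 2 * ln (real (k + Suc N))))"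
      using summable_ignore_initial_segment[OF summable_Gln, of "Suc N"] by simp
    show "summable (\<lambda>k. c * f (k + Suc N))"
      by (intro summable_mult summable_ignore_initial_segment sf)
  qed
  also have "\<dots> = c * (\<Sum>k. f (k + Suc N))"
    by (rule suminf_mult[OF summable_ignore_initial_segment[OF sf]])
  also have "\<dots> \<le> c * W \<delta>"
    using shifted_le[OF sf fnn, of "Suc N"] c0 unfolding W_def f_def by (intro mult_left_mono) auto
  finally show ?thesis unfolding c_def N_def by (simp add: mult_ac)
qed

lemma rankin:
  fixes x \<delta> :: real
  assumes x: "x \<ge> 1" and dl: "0 < \<delta>"
  shows "(\<Sum>d\<in>{1..nat \<lfloor>x\<rfloor>}. \<bar>g d\<bar>) \<le> x powr \<delta> * W \<delta>"
proof -
  define f where "f = (\<lambda>d. \<bar>g d\<bar> * real d powr -\<delta>)"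
  have pt: "\<bar>g d\<bar> \<le> x powr \<delta> * f d" if d: "d \<in> {1..nat \<lfloor>x\<rfloor>}" for d
  proof -
    have d1: "real d \<ge> 1" using d by auto
    have dx: "real d \<le> x" using d x by (intro le_floor_real) auto
    have "real d powr \<delta> \<le> x powr \<delta>" using dx d1 dl by (intro powr_mono2) auto
    moreover have "0 < real d powr \<delta>" using d1 by simp
    ultimately have "1 \<le> x powr \<delta> / real d powr \<delta>" by simp
    also have "x powr \<delta> / real d powr \<delta> = x powr \<delta> * real d powr -\<delta>" by (simp add: powr_minus_divide)
    finally have "\<bar>g d\<bar> * 1 \<le> \<bar>g d\<bar> * (x powr \<delta> * real d powr -\<delta>)" by (intro mult_left_mono) auto
    then show ?thesis unfolding f_def by (simp add: mult_ac)
  qed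
  have "(\<Sum>d\<in>{1..nat \<lfloor>x\<rfloor>}. \<bar>g d\<bar>) \<le> (\<Sum>d\<in>{1..nat \<lfloor>x\<rfloor>}. x powr \<delta> * f d)"
    by (rule sum_mono) (rule pt)
  also have "\<dots> = x powr \<delta> * (\<Sum>d\<in>{1..nat \<lfloor>x\<rfloor>}. f d)" by (simp add: sum_distrib_left)
  also have "(\<Sum>d\<in>{1..nat \<lfloor>x\<rfloor>}. f d) \<le> W \<delta>"
    unfolding W_def f_def by (rule sum_le_suminf[OF summable_W[OF dl]]) auto
  then have "x powr \<delta> * (\<Sum>d\<in>{1..nat \<lfloor>x\<rfloor>}. f d) \<le> x powr \<delta> * W \<delta>" by (intro mult_left_mono) auto
  finally show ?thesis .
qed

lemma sum_Suc_I:
  assumes "f 0 = (0::real)"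
  shows "(\<Sum>d<Suc N. f d) = (\<Sum>d\<in>{1..N}. f d)"
proof -
  have "{..<Suc N} = insert 0 {1..N}" by auto
  then show ?thesis using assms by simp
qed

lemma main_est:
  fixes x \<delta> :: real
  assumes x: "x \<ge> 1" and dl: "0 < \<delta>" "\<delta> \<le> 1/2"
  shows "\<bar>(\<Sum>n\<in>{1..nat \<lfloor>x\<rfloor>}. 1 / beta n) - (\<Sum>d. G d) * ln x
            - (\<Sum>d. G d * (euler_mascheroni - ln (real d)))\<bar>
         \<le> ((1 + 2/\<delta>) * W \<delta> + 4 * W \<delta>) * x powr (2 * \<delta> - 1)"
proof -
  define N where "N = nat \<lfloor>x\<rfloor>"
  define I where "I = {1..N}"
  define \<gamma> :: real where "\<gamma> = euler_mascheroni"
  define E where "E = (\<lambda>d. harm (N div d) - ln (x / real d) - \<gamma>)"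
  define A1 where "A1 = (\<Sum>d\<in>I. G d)"
  define A2 where "A2 = (\<Sum>d\<in>I. G d * (\<gamma> - ln (real d)))"
  define R where "R = (\<Sum>d\<in>I. G d * E d)"
  define T1 where "T1 = (\<Sum>k. G (k + Suc N))"
  define T2 where "T2 = (\<Sum>k. G (k + Suc N) * (\<gamma> - ln (real (k + Suc N))))"
  have x0: "x > 0" using x by simp
  have S: "(\<Sum>n\<in>{1..nat \<lfloor>x\<rfloor>}. 1 / beta n) = (\<Sum>d\<in>I. G d * harm (N div d))"
    unfolding I_def N_def by (rule interchange)
  also have "\<dots> = (\<Sum>d\<in>I. ln x * G d + G d * (\<gamma> - ln (real d)) + G d * E d)"
  proof (rule sum.cong[OF refl])
    fix d assume d: "d \<in> I"
    then have "real d > 0" unfolding I_def by auto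
    then have h: "ln (x / real d) = ln x - ln (real d)" using x0 by (simp add: ln_divide_pos)
    show "G d * harm (N div d) = ln x * G d + G d * (\<gamma> - ln (real d)) + G d * E d"
      unfolding E_def h by (simp add: algebra_simps)
  qed
  also have "\<dots> = ln x * A1 + A2 + R"
    unfolding A1_def A2_def R_def by (simp add: sum.distrib sum_distrib_left)
  finally have S': "(\<Sum>n\<in>{1..nat \<lfloor>x\<rfloor>}. 1 / beta n) = ln x * A1 + A2 + R" .
  have K: "(\<Sum>d. G d) = T1 + A1"
    unfolding T1_def A1_def I_def using suminf_split_initial_segment[OF summable_G, of "Suc N"]
    sum_Suc_I[of G N] by simp
  have L: "(\<Sum>d. G d * (\<gamma> - ln (real d))) = T2 + A2"
    unfolding T2_def A2_def I_def \<gamma>_def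
    using suminf_split_initial_segment[OF summable_GL, of "Suc N"]
      sum_Suc_I[of "\<lambda>d. G d * (euler_mascheroni - ln (real d))" N] by simp
  have sT1: "summable (\<lambda>k. G (k + Suc N))" by (rule summable_ignore_initial_segment[OF summable_G])
  have sT2: "summable (\<lambda>k. G (k + Suc N) * (\<gamma> - ln (real (k + Suc N))))"
    unfolding \<gamma>_def using summable_ignore_initial_segment[OF summable_GL, of "Suc N"] by simp
  have T: "T1 * ln x + T2 = (\<Sum>k. G (k + Suc N) * ln x + G (k + Suc N) * (\<gamma> - ln (real (k + Suc N))))"
    unfolding T1_def T2_def
    by (subst suminf_mult2[OF sT1]) (rule suminf_add[OF summable_mult2[OF sT1] sT2])
  have Tb: "\<bar>T1 * ln x + T2\<bar> \<le> (1 + 2/\<delta>) * W \<delta> * x powr (2 * \<delta> - 1)"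
  proof -
    have "\<bar>T1 * ln x + T2\<bar> \<le> (\<Sum>k. \<bar>G (k + Suc N)\<bar> * (1 + 2 * ln (real (k + Suc N))))"
      unfolding T
    proof (rule abs_suminf_le)
      show "summable (\<lambda>k. \<bar>G (k + Suc N)\<bar> * (1 + 2 * ln (real (k + Suc N))))"
        using summable_ignore_initial_segment[OF summable_Gln, of "Suc N"] by simp
      fix k
      define d where "d = k + Suc N"
      have xd: "x < real d" unfolding d_def N_def by (rule gt_floor_real) (use x in auto)
      have l1: "0 \<le> ln x" using x by simp
      have l2: "ln x \<le> ln (real d)" using xd x0 by simp
      have "\<bar>ln x + (\<gamma> - ln (real d))\<bar> \<le> 1 + 2 * ln (real d)"
        using l1 l2 gamma_bounds unfolding \<gamma>_def by (auto simp: abs_le_iff)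
      then have "\<bar>G d\<bar> * \<bar>ln x + (\<gamma> - ln (real d))\<bar> \<le> \<bar>G d\<bar> * (1 + 2 * ln (real d))"
        by (intro mult_left_mono) auto
      then show "\<bar>G (k + Suc N) * ln x + G (k + Suc N) * (\<gamma> - ln (real (k + Suc N)))\<bar>
                 \<le> \<bar>G (k + Suc N)\<bar> * (1 + 2 * ln (real (k + Suc N)))"
        unfolding d_def by (simp add: abs_mult distrib_left[symmetric])
    qed
    also have "\<dots> \<le> (1 + 2/\<delta>) * W \<delta> * x powr (2 * \<delta> - 1)"
      unfolding N_def by (rule tail_bound[OF x dl])
    finally show ?thesis .
  qed
  have Rb: "\<bar>R\<bar> \<le> 4 * W \<delta> * x powr (2 * \<delta> - 1)"
  proof -
    have "\<bar>R\<bar> \<le> (\<Sum>d\<in>I. \<bar>G d * E d\<bar>)" unfolding R_def by (rule sum_abs)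
    also have "\<dots> \<le> (\<Sum>d\<in>I. (4 / x) * \<bar>g d\<bar>)"
    proof (rule sum_mono)
      fix d assume d: "d \<in> I"
      then have d1: "real d \<ge> 1" unfolding I_def by auto
      have e: "\<bar>E d\<bar> \<le> 4 * real d / x"
        unfolding E_def \<gamma>_def N_def by (rule harm_floor_est[OF x]) (use d in \<open>simp add: I_def N_def\<close>)
      have "\<bar>G d * E d\<bar> = \<bar>G d\<bar> * \<bar>E d\<bar>" by (simp add: abs_mult)
      also have "\<dots> \<le> \<bar>G d\<bar> * (4 * real d / x)" by (intro mult_left_mono e) simp
      also have "\<dots> = (4 / x) * \<bar>g d\<bar>" unfolding G_def using d1 x0 by (simp add: abs_divide field_simps)
      finally show "\<bar>G d * E d\<bar> \<le> (4 / x) * \<bar>g d\<bar>" .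
    qed
    also have "\<dots> = (4 / x) * (\<Sum>d\<in>I. \<bar>g d\<bar>)" by (simp add: sum_distrib_left)
    also have "\<dots> \<le> (4 / x) * (x powr \<delta> * W \<delta>)"
      unfolding I_def N_def using x0 by (intro mult_left_mono rankin[OF x dl(1)]) auto
    also have "\<dots> = 4 * W \<delta> * (x powr \<delta> / x)" by simp
    also have "x powr \<delta> / x = x powr (\<delta> - 1)" using x0 by (simp add: powr_diff)
    also have "4 * W \<delta> * x powr (\<delta> - 1) \<le> 4 * W \<delta> * x powr (2 * \<delta> - 1)"
      using x dl W_nonneg[OF dl(1)] by (intro mult_left_mono powr_mono) auto
    finally show ?thesis .
  qed
  have "(\<Sum>n\<in>{1..nat \<lfloor>x\<rfloor>}. 1 / beta n) - (\<Sum>d. G d) * ln x - (\<Sum>d. G d * (euler_mascheroni - ln (real d)))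
        = R - (T1 * ln x + T2)"
    unfolding S' K L[unfolded \<gamma>_def] by (simp add: algebra_simps)
  also have "\<bar>R - (T1 * ln x + T2)\<bar> \<le> \<bar>R\<bar> + \<bar>T1 * ln x + T2\<bar>" by (rule abs_triangle_ineq4)
  finally show ?thesis using Rb Tb by (simp add: algebra_simps)
qed

theorem mainTheorem5:
  shows "\<exists>K1 K2 :: real.
    ((\<lambda>p::nat. if prime p then K1_factor p else 1) has_prod K1) \<and>
    (\<forall>\<epsilon>>0. (\<lambda>x::real. (\<Sum>n\<in>{1..nat \<lfloor>x\<rfloor>}. 1 / beta n) - K1 * ln x - K2)
              \<in> O[at_top](\<lambda>x. x powr (-1 + \<epsilon>)))"
proof (intro exI conjI allI impI)
  show "(\<lambda>p::nat. if prime p then K1_factor p else 1) has_prod (\<Sum>d. G d)"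
    using euler_product by blast
  fix \<epsilon> :: real assume e: "\<epsilon> > 0"
  define \<delta> where "\<delta> = min \<epsilon> (1/2) / 2"
  have dl: "0 < \<delta>" "\<delta> \<le> 1/2" unfolding \<delta>_def using e by auto
  have de: "2 * \<delta> - 1 \<le> -1 + \<epsilon>" unfolding \<delta>_def by simp
  define C where "C = (1 + 2/\<delta>) * W \<delta> + 4 * W \<delta>"
  have C0: "0 \<le> C" unfolding C_def using dl W_nonneg[OF dl(1)] by simp
  show "(\<lambda>x::real. (\<Sum>n\<in>{1..nat \<lfloor>x\<rfloor>}. 1 / beta n) - (\<Sum>d. G d) * ln x - (\<Sum>d. G d * (euler_mascheroni - ln (real d))))
          \<in> O[at_top](\<lambda>x. x powr (-1 + \<epsilon>))"
  proof (rule bigoI)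
    show "\<forall>\<^sub>F x in at_top. norm ((\<Sum>n\<in>{1..nat \<lfloor>x\<rfloor>}. 1 / beta n) - (\<Sum>d. G d) * ln x - (\<Sum>d. G d * (euler_mascheroni - ln (real d))))
            \<le> C * norm (x powr (-1 + \<epsilon>))"
      using eventually_ge_at_top[of "1::real"]
    proof eventually_elim
      case (elim x)
      have "norm ((\<Sum>n\<in>{1..nat \<lfloor>x\<rfloor>}. 1 / beta n) - (\<Sum>d. G d) * ln x - (\<Sum>d. G d * (euler_mascheroni - ln (real d))))
            \<le> C * x powr (2 * \<delta> - 1)"
        unfolding C_def real_norm_def by (rule main_est[OF elim dl])
      also have "\<dots> \<le> C * x powr (-1 + \<epsilon>)"
        using elim de C0 by (intro mult_left_mono powr_mono) auto
      also have "\<dots> = C * norm (x powr (-1 + \<epsilon>))" by simp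
      finally show ?case .
    qed
  qed
qed

end
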